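(* Let $M$ be the torus and suppose a $2,\!6$-quadrangulation of $M$ is given, i.e. a map on $M$ all of whose faces are quadrilaterals, in which every vertex has degree $4$ except for exactly two vertices, one of degree $2$ and one of degree $6$. Then the edges of this quadrangulation cannot be colored with two colors such that colors alternate around each face (equivalently, around each vertex).
   Context: A map on a closed connected surface $M$ is an embedding of a finite graph $G$ in $M$ such that every face (connected component of $M\smallsetminus G$) is an open disk. Here a graph is a one-dimensional cell complex, so loops and multiple edges are allowed. A face is a $k$-gon if its boundary walk has $k$ edges (counted with multiplicity). A quadrangulation is a map all of whose faces are quadrilaterals. The degree of a vertex counts edge-ends (a loop contributes $2$). *)

theory Defs
  imports Main
begin

text \<open>Combinatorial (rotation-system) encoding of maps on closed connected
orientable surfaces. A map is given by a finite set of darts D (half-edges),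
a fixed-point-free involution alpha on D (the two ends of an edge) and a
permutation sigma of D (cyclic order of darts around each vertex).
Vertices = sigma-orbits, edges = alpha-orbits, faces = orbits of
phi = sigma o alpha (the boundary walks). The degree of a vertex is the size
of its sigma-orbit (a loop contributes 2), the length of a face is the size of
its phi-orbit.\<close>

definition orb :: "('a \<Rightarrow> 'a) \<Rightarrow> 'a \<Rightarrow> 'a set" where
  "orb f x = {(f ^^ n) x | n. True}"

definition orbits :: "('a \<Rightarrow> 'a) \<Rightarrow> 'a set \<Rightarrow> 'a set set" where
  "orbits f D = orb f ` D"

definition face_perm :: "('a \<Rightarrow> 'a) \<Rightarrow> ('a \<Rightarrow> 'a) \<Rightarrow> 'a \<Rightarrow> 'a" where
  "face_perm \<alpha> \<sigma> = \<sigma> \<circ> \<alpha>"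

text \<open>Darts reachable from x by words in alpha and sigma (both are permutations
of a finite set, so forward iteration suffices).\<close>
inductive_set reach :: "('a \<Rightarrow> 'a) \<Rightarrow> ('a \<Rightarrow> 'a) \<Rightarrow> 'a \<Rightarrow> 'a set"
  for \<alpha> \<sigma> x where
  start: "x \<in> reach \<alpha> \<sigma> x"
| step_a: "y \<in> reach \<alpha> \<sigma> x \<Longrightarrow> \<alpha> y \<in> reach \<alpha> \<sigma> x"
| step_s: "y \<in> reach \<alpha> \<sigma> x \<Longrightarrow> \<sigma> y \<in> reach \<alpha> \<sigma> x"

definition comb_map :: "'a set \<Rightarrow> ('a \<Rightarrow> 'a) \<Rightarrow> ('a \<Rightarrow> 'a) \<Rightarrow> bool" where
  "comb_map D \<alpha> \<sigma> \<longleftrightarrow>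
     finite D \<and> D \<noteq> {} \<and>
     (\<forall>d\<in>D. \<alpha> d \<in> D \<and> \<alpha> d \<noteq> d \<and> \<alpha> (\<alpha> d) = d) \<and>
     bij_betw \<sigma> D D \<and>
     (\<forall>d\<in>D. reach \<alpha> \<sigma> d = D)"

definition euler_char :: "'a set \<Rightarrow> ('a \<Rightarrow> 'a) \<Rightarrow> ('a \<Rightarrow> 'a) \<Rightarrow> int" where
  "euler_char D \<alpha> \<sigma> =
     int (card (orbits \<sigma> D)) - int (card (orbits \<alpha> D))
     + int (card (orbits (face_perm \<alpha> \<sigma>) D))"

definition torus_map :: "'a set \<Rightarrow> ('a \<Rightarrow> 'a) \<Rightarrow> ('a \<Rightarrow> 'a) \<Rightarrow> bool" where
  "torus_map D \<alpha> \<sigma> \<longleftrightarrow> comb_map D \<alpha> \<sigma> \<and> euler_char D \<alpha> \<sigma> = 0"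

definition quadrangulation :: "'a set \<Rightarrow> ('a \<Rightarrow> 'a) \<Rightarrow> ('a \<Rightarrow> 'a) \<Rightarrow> bool" where
  "quadrangulation D \<alpha> \<sigma> \<longleftrightarrow> (\<forall>f\<in>orbits (face_perm \<alpha> \<sigma>) D. card f = 4)"

definition degrees_2_6 :: "'a set \<Rightarrow> ('a \<Rightarrow> 'a) \<Rightarrow> bool" where
  "degrees_2_6 D \<sigma> \<longleftrightarrow>
     (\<exists>u\<in>orbits \<sigma> D. \<exists>w\<in>orbits \<sigma> D.
        card u = 2 \<and> card w = 6 \<and>
        (\<forall>v\<in>orbits \<sigma> D. v \<noteq> u \<longrightarrow> v \<noteq> w \<longrightarrow> card v = 4))"

text \<open>A 2-colouring of the edges (a colouring of darts constant on alpha-orbits)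
whose colours alternate along every face boundary walk.\<close>
definition face_alternating_2col :: "'a set \<Rightarrow> ('a \<Rightarrow> 'a) \<Rightarrow> ('a \<Rightarrow> 'a) \<Rightarrow> ('a \<Rightarrow> bool) \<Rightarrow> bool" where
  "face_alternating_2col D \<alpha> \<sigma> c \<longleftrightarrow>
     (\<forall>d\<in>D. c (\<alpha> d) = c d) \<and> (\<forall>d\<in>D. c (face_perm \<alpha> \<sigma> d) \<noteq> c d)"

end

theory Submission
  imports Defs
begin

definition pon :: "('a \<Rightarrow> 'a) \<Rightarrow> 'a set \<Rightarrow> bool" where
  "pon g S \<longleftrightarrow> finite S \<and> (\<forall>x\<in>S. g x \<in> S) \<and> inj_on g S"

lemma fpa: "(f^^m) ((f^^n) x) = (f^^(m+n)) x"
  by (simp add: funpow_add)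

lemma pon_funpow_in: "pon g S \<Longrightarrow> x \<in> S \<Longrightarrow> (g^^n) x \<in> S"
  by (induction n) (auto simp: pon_def)

lemma pon_inj_funpow: "pon g S \<Longrightarrow> inj_on (g^^n) S"
proof (induction n)
  case 0 then show ?case by simp
next
  case (Suc n)
  have "(g^^n) ` S \<subseteq> S" using pon_funpow_in[OF Suc.prems] by auto
  then have "inj_on g ((g^^n) ` S)" using Suc.prems by (auto simp: pon_def intro: inj_on_subset)
  then have "inj_on (g \<circ> (g^^n)) S" using Suc by (intro comp_inj_on) auto
  then show ?case by (simp add: comp_def)
qed

lemma pon_period_ex:
  assumes "pon g S" "x \<in> S" shows "\<exists>k>0. (g^^k) x = x"
proof -
  have "range (\<lambda>n. (g^^n) x) \<subseteq> S" using pon_funpow_in[OF assms] by auto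
  then have fin: "finite (range (\<lambda>n. (g^^n) x))" using assms(1) by (auto simp: pon_def intro: finite_subset)
  have "\<not> inj (\<lambda>n::nat. (g^^n) x)"
  proof
    assume "inj (\<lambda>n::nat. (g^^n) x)"
    then have "finite (UNIV::nat set)" using fin finite_imageD by blast
    then show False by simp
  qed
  then obtain i j where ij: "i \<noteq> j" "(g^^i) x = (g^^j) x" by (auto simp: inj_def)
  have main: "\<exists>k>0. (g^^k) x = x" if "i < j" "(g^^i) x = (g^^j) x" for i j
  proof -
    have "(g^^i) ((g^^(j-i)) x) = (g^^j) x" using that by (simp add: fpa)
    then have "(g^^i) ((g^^(j-i)) x) = (g^^i) x" using that by simp
    moreover have "(g^^(j-i)) x \<in> S" by (rule pon_funpow_in[OF assms])
    ultimately have "(g^^(j-i)) x = x" using pon_inj_funpow[OF assms(1), of i] assms(2) by (auto simp: inj_on_def)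
    then show ?thesis using that by (intro exI[of _ "j-i"]) auto
  qed
  show ?thesis using ij main by (cases "i < j") (auto simp: not_less_iff_gr_or_eq)
qed

definition per :: "('a \<Rightarrow> 'a) \<Rightarrow> 'a \<Rightarrow> nat" where
  "per g x = (LEAST k. 0 < k \<and> (g^^k) x = x)"

lemma per: assumes "pon g S" "x \<in> S" shows "0 < per g x" "(g^^per g x) x = x"
proof -
  obtain k where "0 < k \<and> (g^^k) x = x" using pon_period_ex[OF assms] by blast
  then have "0 < per g x \<and> (g^^per g x) x = x" unfolding per_def by (rule LeastI)
  then show "0 < per g x" "(g^^per g x) x = x" by auto
qed

lemma per_le: "0 < k \<Longrightarrow> (g^^k) x = x \<Longrightarrow> per g x \<le> k"
  unfolding per_def by (rule Least_le) simp

lemma funpow_mult_per: assumes "(g^^k) x = x" shows "(g^^(m*k)) x = x"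
proof (induction m)
  case 0 then show ?case by simp
next
  case (Suc m)
  have "(g^^(Suc m * k)) x = (g^^k) ((g^^(m*k)) x)" by (simp add: fpa)
  then show ?case using Suc assms by simp
qed

lemma funpow_mod_per: assumes "pon g S" "x \<in> S"
  shows "(g^^n) x = (g^^(n mod per g x)) x"
proof -
  have e: "n mod per g x + (n div per g x) * per g x = n" by (rule mod_div_mult_eq)
  have "(g^^n) x = (g^^(n mod per g x)) ((g^^((n div per g x) * per g x)) x)"
    by (simp only: fpa e)
  also have "(g^^((n div per g x) * per g x)) x = x" by (rule funpow_mult_per[OF per(2)[OF assms]])
  finally show ?thesis .
qed

lemma orb_eq: assumes "pon g S" "x \<in> S"
  shows "orb g x = (\<lambda>n. (g^^n) x) ` {..<per g x}"
proof
  show "orb g x \<subseteq> (\<lambda>n. (g^^n) x) ` {..<per g x}"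
  proof
    fix y assume "y \<in> orb g x"
    then obtain n where yn: "y = (g^^n) x" by (auto simp: orb_def)
    have "(g^^n) x = (g^^(n mod per g x)) x" by (rule funpow_mod_per[OF assms])
    with yn have y2: "y = (g^^(n mod per g x)) x" by (rule trans)
    have "n mod per g x < per g x" using per(1)[OF assms] by simp
    with y2 show "y \<in> (\<lambda>n. (g^^n) x) ` {..<per g x}" by auto
  qed
qed (auto simp: orb_def)

lemma inj_per: assumes "pon g S" "x \<in> S"
  shows "inj_on (\<lambda>n. (g^^n) x) {..<per g x}"
proof -
  have that: "False" if "i < j" "j < per g x" "(g^^i) x = (g^^j) x" for i j
  proof -
    have "(g^^i) ((g^^(j-i)) x) = (g^^j) x" using that by (simp add: fpa)
    then have "(g^^i) ((g^^(j-i)) x) = (g^^i) x" using that by simp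
    moreover have "(g^^(j-i)) x \<in> S" by (rule pon_funpow_in[OF assms])
    ultimately have "(g^^(j-i)) x = x" using pon_inj_funpow[OF assms(1), of i] assms(2) by (auto simp: inj_on_def)
    then have "per g x \<le> j - i" using that by (intro per_le) auto
    then show False using that by auto
  qed
  show ?thesis unfolding inj_on_def
  proof (intro ballI impI)
    fix i j assume ij: "i \<in> {..<per g x}" "j \<in> {..<per g x}" "(g^^i) x = (g^^j) x"
    show "i = j"
    proof (cases i j rule: linorder_cases)
      case less then show ?thesis using that ij by auto
    next
      case greater then show ?thesis using that[of j i] ij by auto
    qed
  qed
qed

lemma card_orb: assumes "pon g S" "x \<in> S" shows "card (orb g x) = per g x"
  using orb_eq[OF assms] inj_per[OF assms] by (simp add: card_image)

lemma orb_sub: assumes "pon g S" "x \<in> S" shows "orb g x \<subseteq> S"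
  using pon_funpow_in[OF assms] by (auto simp: orb_def)

lemma finite_orb: assumes "pon g S" "x \<in> S" shows "finite (orb g x)"
  using orb_sub[OF assms] assms(1) by (auto simp: pon_def intro: finite_subset)

lemma funpow_in_orb: "(g^^n) x \<in> orb g x"
  by (auto simp: orb_def)

lemma funpow_in_orb': "y = (g^^n) x \<Longrightarrow> y \<in> orb g x"
  by (auto simp: orb_def)

lemma self_in_orb: "x \<in> orb g x"
  using funpow_in_orb[where n=0 and g=g and x=x] by simp

lemma step_in_orb: "g x \<in> orb g x"
  using funpow_in_orb[where n=1 and g=g and x=x] by simp

lemma orb_same: assumes "pon g S" "x \<in> S" "y \<in> orb g x"
  shows "orb g y = orb g x"
proof -
  obtain m where y: "y = (g^^m) x" using assms(3) by (auto simp: orb_def)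
  define p where "p = per g x"
  have p: "0 < p" "(g^^p) x = x" using per[OF assms(1,2)] p_def by auto
  have "(g^^(m*(p-1))) y = (g^^(m*(p-1) + m)) x" by (simp add: y funpow_add)
  also have "m*(p-1) + m = m * p" using p(1) by (cases p) (auto simp: algebra_simps)
  also have "(g^^(m*p)) x = x" by (rule funpow_mult_per[OF p(2)])
  finally have x: "(g^^(m*(p-1))) y = x" .
  show ?thesis
  proof
    show "orb g y \<subseteq> orb g x"
    proof
      fix z assume "z \<in> orb g y"
      then obtain n where "z = (g^^n) y" by (auto simp: orb_def)
      then have "z = (g^^(n+m)) x" by (simp add: y fpa)
      then show "z \<in> orb g x" by (auto simp: orb_def)
    qed
    show "orb g x \<subseteq> orb g y"
    proof
      fix z assume "z \<in> orb g x"
      then obtain n where "z = (g^^n) x" by (auto simp: orb_def)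
      then have "z = (g^^(n + m*(p-1))) y" by (simp add: x[symmetric] fpa)
      then show "z \<in> orb g y" by (auto simp: orb_def)
    qed
  qed
qed

lemma pre_in_orb: assumes "pon g S" "v \<in> S" "z \<in> S" "g v \<in> orb g z"
  shows "v \<in> orb g z"
proof -
  have "g v \<in> S" using assms by (auto simp: pon_def)
  have "(g^^per g v) v = v" "0 < per g v" using per[OF assms(1,2)] by auto
  then have "(g^^(Suc (per g v - 1))) v = v" by simp
  then have "(g^^(per g v - 1)) (g v) = v" by (simp only: funpow_Suc_right o_apply)
  then have "v \<in> orb g (g v)" by (intro funpow_in_orb') (rule sym)
  then show ?thesis using orb_same[OF assms(1,3,4)] by simp
qed

lemma pre_exists: assumes "pon g S" "x \<in> S" "v \<in> orb g x"
  shows "\<exists>v'\<in>orb g x. g v' = v"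
proof -
  have vS: "v \<in> S" using orb_sub[OF assms(1,2)] assms(3) by auto
  have "(g^^per g v) v = v" "0 < per g v" using per[OF assms(1) vS] by auto
  then have "(g^^(Suc (per g v - 1))) v = v" by simp
  then have "g ((g^^(per g v - 1)) v) = v" by (simp only: funpow.simps o_apply)
  moreover have "(g^^(per g v - 1)) v \<in> orb g v"
    by (rule funpow_in_orb)
  then have "(g^^(per g v - 1)) v \<in> orb g x" using orb_same[OF assms] by simp
  ultimately show ?thesis by blast
qed

lemma orb_image_sub:
  assumes "pon g1 S" "pon g2 S" "\<forall>y\<in>S. R y \<in> S" "x \<in> S"
    "\<forall>y\<in>orb g1 x. g2 (R (g1 y)) = R y"
  shows "R ` orb g1 x \<subseteq> orb g2 (R x)"
proof -
  have "R ((g1^^n) x) \<in> orb g2 (R x)" for n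
  proof (induction n)
    case 0 then show ?case using self_in_orb by simp
  next
    case (Suc n)
    let ?y = "(g1^^n) x"
    have yo: "?y \<in> orb g1 x" by (rule funpow_in_orb)
    have yS: "?y \<in> S" using pon_funpow_in[OF assms(1,4)] .
    have "g2 (R (g1 ?y)) = R ?y" using assms(5) yo by blast
    moreover have "R (g1 ?y) \<in> S" using assms yS by (auto simp: pon_def)
    ultimately show ?case using pre_in_orb[OF assms(2), of "R (g1 ?y)" "R x"] Suc assms(3,4) by simp
  qed
  then show ?thesis by (auto simp: orb_def)
qed

lemma orb_image_sup:
  assumes "pon g1 S" "pon g2 S" "\<forall>y\<in>S. R y \<in> S" "x \<in> S"
    "\<forall>y\<in>orb g1 x. g2 (R (g1 y)) = R y"
  shows "orb g2 (R x) \<subseteq> R ` orb g1 x"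
proof -
  have "(g2^^n) (R x) \<in> R ` orb g1 x" for n
  proof (induction n)
    case 0 then show ?case using self_in_orb by fastforce
  next
    case (Suc n)
    then obtain v where v: "v \<in> orb g1 x" "(g2^^n) (R x) = R v" by auto
    obtain v' where v': "v' \<in> orb g1 x" "g1 v' = v" using pre_exists[OF assms(1,4) v(1)] by blast
    have "g2 (R v) = R v'" using assms(5) v' by blast
    then show ?case using v v' by auto
  qed
  then show ?thesis by (auto simp: orb_def)
qed

lemma reflect:
  assumes "pon g S" "x \<in> S" "\<forall>y\<in>S. R y \<in> S"
    "\<forall>y\<in>orb g x. g (R (g y)) = R y" "R x = (g^^k) x"
  shows "\<exists>j. R ((g^^j) x) = (g^^j) x \<or> (R ((g^^j) x) = (g^^Suc j) x \<and> k = 2*j+1)"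
proof -
  have key: "(g^^j) (R ((g^^j) x)) = R x" for j
  proof (induction j)
    case 0 then show ?case by simp
  next
    case (Suc j)
    have e1: "(g^^Suc j) x = g ((g^^j) x)" by simp
    have e2: "(g^^Suc j) z = (g^^j) (g z)" for z by (simp only: funpow_Suc_right o_apply)
    have "(g^^Suc j) (R ((g^^Suc j) x)) = (g^^j) (g (R ((g^^Suc j) x)))"
      by (rule e2)
    also have "\<dots> = (g^^j) (g (R (g ((g^^j) x))))" by (simp only: e1)
    also have "g (R (g ((g^^j) x))) = R ((g^^j) x)" using assms(4) funpow_in_orb[where g=g and n=j and x=x] by blast
    finally show ?case using Suc by simp
  qed
  define j where "j = k div 2"
  have jk: "j + (k - j) = k" by (simp add: j_def)
  have B: "(g^^j) ((g^^(k-j)) x) = (g^^k) x" by (simp only: fpa jk)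
  have A: "(g^^j) (R ((g^^j) x)) = (g^^k) x"
    using key[of j] assms(5) by simp
  have "(g^^j) (R ((g^^j) x)) = (g^^j) ((g^^(k-j)) x)"
    by (rule trans[OF A B[symmetric]])
  moreover have "R ((g^^j) x) \<in> S" using assms(3) pon_funpow_in[OF assms(1,2)] by blast
  moreover have "(g^^(k-j)) x \<in> S" using pon_funpow_in[OF assms(1,2)] by blast
  ultimately have e: "R ((g^^j) x) = (g^^(k-j)) x"
    using pon_inj_funpow[OF assms(1), of j] by (auto simp: inj_on_def)
  show ?thesis
  proof (cases "even k")
    case True
    then have "k - j = j" by (auto simp: j_def)
    then show ?thesis using e by auto
  next
    case False
    then have "k - j = Suc j" "k = 2*j+1" by (auto simp: j_def elim: oddE)
    then show ?thesis using e by (intro exI[of _ j]) auto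
  qed
qed

lemma even_card_inv:
  "finite A \<Longrightarrow> \<forall>x\<in>A. f x \<in> A \<and> f x \<noteq> x \<and> f (f x) = x \<Longrightarrow> even (card A)"
proof (induction "card A" arbitrary: A rule: less_induct)
  case less
  show ?case
  proof (cases "A = {}")
    case True then show ?thesis by simp
  next
    case False
    then obtain x where x: "x \<in> A" by auto
    let ?B = "A - {x, f x}"
    have fx: "f x \<in> A" "f x \<noteq> x" using less.prems x by auto
    have cB: "card ?B = card A - 2" using x fx less.prems(1) by (simp add: card_Diff_subset)
    have "card {x, f x} = 2" using fx by simp
    moreover have "card {x, f x} \<le> card A" using x fx less.prems(1) by (intro card_mono) auto
    ultimately have cA: "card A \<ge> 2" by simp
    have "\<forall>y\<in>?B. f y \<in> ?B \<and> f y \<noteq> y \<and> f (f y) = y" using less.prems(2) x by auto metis+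
    moreover have "card ?B < card A" using cB cA by simp
    moreover have "finite ?B" using less.prems(1) by simp
    ultimately have "even (card ?B)" using less(1)[of ?B] by blast
    then show ?thesis using cB cA by (metis add_diff_inverse_nat even_add even_numeral not_less)
  qed
qed


lemma caseb:
  fixes S :: "'a set" and A psi :: "'a \<Rightarrow> 'a" and t1 t2 t3 :: 'a
  assumes fin: "finite S"
  and A: "\<forall>x\<in>S. A x \<in> S \<and> A x \<noteq> x \<and> A (A x) = x"
  and psiS: "\<forall>x\<in>S. psi x \<in> S" and psi_inj: "inj_on psi S"
  and T: "t1\<in>S" "t2\<in>S" "t3\<in>S" "t1\<noteq>t2" "t2\<noteq>t3" "t1\<noteq>t3" "psi t1 = t2" "psi t2 = t3" "psi t3 = t1"
  and inv: "\<forall>x\<in>S. x \<noteq> t1 \<longrightarrow> x \<noteq> t2 \<longrightarrow> x \<noteq> t3 \<longrightarrow> psi (psi x) = x"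
  and h1: "A t2 \<in> orb (\<lambda>x. psi (A x)) (A t1)"
  and h2: "A t3 \<notin> orb (\<lambda>x. psi (A x)) (A t1)"
  and h3: "card (orb (\<lambda>x. psi (A x)) (A t3)) = card (orb (\<lambda>x. psi (A x)) (A t1))"
  shows False
proof -
  define W where "W = (\<lambda>x. psi (A x))"
  have Ainj: "inj_on A S" unfolding inj_on_def using A by metis
  have Apon: "pon A S" using fin A Ainj by (auto simp: pon_def)
  have Wpon: "pon W S"
  proof -
    have "A ` S \<subseteq> S" using A by auto
    then have "inj_on psi (A ` S)" by (rule inj_on_subset[OF psi_inj])
    then have "inj_on (psi \<circ> A) S" using Ainj by (intro comp_inj_on)
    then show ?thesis using fin A psiS by (auto simp: pon_def W_def comp_def)
  qed
  have AT: "A t1 \<in> S" "A t2 \<in> S" "A t3 \<in> S" using A T by auto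
  have ATd: "A t1 \<noteq> A t2" "A t2 \<noteq> A t3" "A t1 \<noteq> A t3" using A T by metis+
  define pi where "pi = (\<lambda>y. if y = A t1 then A t2 else if y = A t2 then A t3 else if y = A t3 then A t1 else y)"
  define W' where "W' = (\<lambda>y. W (pi y))"
  have piS: "\<forall>y\<in>S. pi y \<in> S" using AT by (auto simp: pi_def)
  have pi_inj: "inj_on pi S" using ATd unfolding inj_on_def pi_def by auto
  have W'pon: "pon W' S"
  proof -
    have "inj_on W (pi ` S)" using Wpon piS by (auto simp: pon_def intro: inj_on_subset)
    then have "inj_on (W \<circ> pi) S" using pi_inj by (intro comp_inj_on)
    then show ?thesis using Wpon piS fin by (auto simp: pon_def W'_def comp_def)
  qed
  have psiT: "psi z \<noteq> t1 \<and> psi z \<noteq> t2 \<and> psi z \<noteq> t3" if "z \<in> S" "z \<noteq> t1" "z \<noteq> t2" "z \<noteq> t3" for z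
    using that T psi_inj unfolding inj_on_def by metis
  have relW': "\<forall>y\<in>orb W t1. W' (A (W y)) = A y"
  proof
    fix y assume "y \<in> orb W t1"
    then have yS: "y \<in> S" using orb_sub[OF Wpon T(1)] by auto
    define z where "z = A y"
    have zS: "z \<in> S" using A yS z_def by auto
    have AW: "A (W y) = A (psi z)" by (simp add: W_def z_def)
    have "W' (A (psi z)) = z"
    proof -
      consider "z = t1" | "z = t2" | "z = t3" | "z \<noteq> t1 \<and> z \<noteq> t2 \<and> z \<noteq> t3" by blast
      then show ?thesis
      proof cases
        case 1 then show ?thesis using T ATd A by (simp add: W'_def pi_def W_def)
      next
        case 2 then show ?thesis using T ATd A by (simp add: W'_def pi_def W_def)
      next
        case 3 then show ?thesis using T ATd A by (simp add: W'_def pi_def W_def)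
      next
        case 4
        then have pz: "psi z \<noteq> t1" "psi z \<noteq> t2" "psi z \<noteq> t3" using psiT zS by auto
        have pzS: "psi z \<in> S" using psiS zS by auto
        have "A (psi z) \<noteq> A t1" "A (psi z) \<noteq> A t2" "A (psi z) \<noteq> A t3"
          using pz pzS T A by metis+
        then have "W' (A (psi z)) = psi (A (A (psi z)))" by (simp add: W'_def pi_def W_def)
        also have "\<dots> = psi (psi z)" using A pzS by simp
        also have "\<dots> = z" using inv zS 4 by auto
        finally show ?thesis .
      qed
    qed
    then show "W' (A (W y)) = A y" using AW z_def by simp
  qed
  have sub: "A ` orb W t1 \<subseteq> orb W' (A t1)"
    by (rule orb_image_sub[OF Wpon W'pon _ T(1) relW']) (use A in auto)
  have fin1: "finite (orb W' (A t1))" using finite_orb[OF W'pon AT(1)] .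
  have "card (A ` orb W t1) \<le> card (orb W' (A t1))" using card_mono[OF fin1 sub] .
  moreover have "card (A ` orb W t1) = card (orb W t1)"
    using Ainj orb_sub[OF Wpon T(1)] by (intro card_image) (auto intro: inj_on_subset)
  moreover have "t1 \<in> orb W (A t3)"
    using step_in_orb[of W "A t3"] A T by (simp add: W_def)
  then have "orb W t1 = orb W (A t3)" using orb_same[OF Wpon AT(3)] by simp
  ultimately have ge: "card (orb W (A t3)) \<le> card (orb W' (A t1))" by simp
  define X where "X = orb W (A t1)"
  have X2: "orb W (A t2) = X" unfolding X_def using orb_same[OF Wpon AT(1)] h1 by (simp add: W_def)
  define n where "n = per W (A t2)"
  have cX: "card X = n" using card_orb[OF Wpon AT(2)] X2 n_def by simp
  have h3': "card (orb W (A t3)) = n" using h3 cX by (simp add: W_def X_def)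
  have "A t1 \<in> orb W (A t2)" using X2 self_in_orb unfolding X_def by metis
  then obtain m where m: "m < n" "A t1 = (W^^m) (A t2)"
    using orb_eq[OF Wpon AT(2)] n_def by auto
  have m0: "0 < m" using m ATd by (cases m) auto
  define P where "P = (\<lambda>j. 0 < j \<and> (W^^j) (A t2) \<in> {A t1, A t2, A t3})"
  define b where "b = (LEAST j. P j)"
  have Pm: "P m" using m m0 by (auto simp: P_def)
  have Pb: "P b" unfolding b_def using Pm by (rule LeastI)
  have bm: "b \<le> m" unfolding b_def using Pm by (rule Least_le)
  have notP: "\<not> P j" if "j < b" for j using that unfolding b_def by (rule not_less_Least)
  have bX: "(W^^b) (A t2) \<in> X" using funpow_in_orb X2 by metis
  have b3: "(W^^b) (A t2) \<noteq> A t3" using bX h2 X_def by (auto simp: W_def)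
  have b2: "(W^^b) (A t2) \<noteq> A t2"
  proof
    assume "(W^^b) (A t2) = A t2"
    then have "n \<le> b" using Pb per_le n_def by (auto simp: P_def)
    then show False using bm m by simp
  qed
  have b1: "(W^^b) (A t2) = A t1" using Pb b2 b3 by (auto simp: P_def)
  have iter: "0 < j \<longrightarrow> j \<le> b \<longrightarrow> (W'^^j) (A t1) = (W^^j) (A t2)" for j
  proof (induction j)
    case 0 then show ?case by simp
  next
    case (Suc j)
    show ?case
    proof (cases "j = 0")
      case True then show ?thesis using ATd by (simp add: W'_def pi_def)
    next
      case False
      show ?thesis
      proof (intro impI)
        assume "Suc j \<le> b"
        then have IH: "(W'^^j) (A t1) = (W^^j) (A t2)" using Suc False by simp
        have "\<not> P j" using notP \<open>Suc j \<le> b\<close> by simp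
        then have nt: "(W^^j) (A t2) \<notin> {A t1, A t2, A t3}" using False by (simp add: P_def)
        have "(W'^^Suc j) (A t1) = W' ((W^^j) (A t2))" using IH by simp
        also have "\<dots> = W ((W^^j) (A t2))" using nt by (simp add: W'_def pi_def)
        finally show "(W'^^Suc j) (A t1) = (W^^Suc j) (A t2)" by simp
      qed
    qed
  qed
  have "(W'^^b) (A t1) = A t1" using iter[of b] Pb b1 by (simp add: P_def)
  then have "per W' (A t1) \<le> b" using Pb per_le by (auto simp: P_def)
  then have "card (orb W' (A t1)) \<le> b" using card_orb[OF W'pon AT(1)] by simp
  then show False using ge h3' bm m by simp
qed


lemma key:
  fixes S :: "'a set" and A Q psi :: "'a \<Rightarrow> 'a" and p t1 t2 t3 :: 'a
  assumes fin: "finite S"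
  and A: "\<forall>x\<in>S. A x \<in> S \<and> A x \<noteq> x \<and> A (A x) = x"
  and Q: "\<forall>x\<in>S. Q x \<in> S \<and> Q x \<noteq> x \<and> Q (Q x) = x"
  and psiS: "\<forall>x\<in>S. psi x \<in> S" and psi_inj: "inj_on psi S"
  and rel: "\<forall>x\<in>S. psi (A (Q (psi (A x)))) = Q x"
  and OW: "\<forall>x\<in>S. Q x \<noteq> psi (A x)"
  and p: "p \<in> S" "psi p = p" "\<forall>x\<in>S. psi x = x \<longrightarrow> x = p"
  and T: "t1\<in>S" "t2\<in>S" "t3\<in>S" "t1\<noteq>t2" "t2\<noteq>t3" "t1\<noteq>t3" "psi t1 = t2" "psi t2 = t3" "psi t3 = t1"
  and inv: "\<forall>x\<in>S. x \<noteq> t1 \<longrightarrow> x \<noteq> t2 \<longrightarrow> x \<noteq> t3 \<longrightarrow> psi (psi x) = x"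
  shows False
proof -
  define W where "W = (\<lambda>x. psi (A x))"
  have Ainj: "inj_on A S" unfolding inj_on_def using A by metis
  have Oinj: "inj_on Q S" unfolding inj_on_def using Q by metis
  have Wpon: "pon W S"
  proof -
    have "A ` S \<subseteq> S" using A by auto
    then have "inj_on psi (A ` S)" by (rule inj_on_subset[OF psi_inj])
    then have "inj_on (psi \<circ> A) S" using Ainj by (intro comp_inj_on)
    then show ?thesis using fin A psiS by (auto simp: pon_def W_def comp_def)
  qed
  have WS: "W x \<in> S" if "x \<in> S" for x using Wpon that by (auto simp: pon_def)
  have AS: "\<forall>y\<in>S. A y \<in> S" using A by blast
  have OS: "\<forall>y\<in>S. Q y \<in> S" using Q by blast
  have AT: "A t1 \<in> S" "A t2 \<in> S" "A t3 \<in> S" using A T by auto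
  have relO: "\<forall>y\<in>orb W x. W (Q (W y)) = Q y" if "x \<in> S" for x
    using rel orb_sub[OF Wpon that] by (auto simp: W_def)
  have Oimg: "Q ` orb W x = orb W (Q x)" if "x \<in> S" for x
    using orb_image_sub[OF Wpon Wpon OS that relO[OF that]]
      orb_image_sup[OF Wpon Wpon OS that relO[OF that]] by blast
  have Ofix: "Q x \<notin> orb W x" if xS: "x \<in> S" for x
  proof
    assume "Q x \<in> orb W x"
    then obtain k where k: "Q x = (W^^k) x" by (auto simp: orb_def)
    obtain j where "Q ((W^^j) x) = (W^^j) x \<or> (Q ((W^^j) x) = (W^^Suc j) x \<and> k = 2*j+1)"
      using reflect[OF Wpon xS OS relO[OF xS] k] by blast
    moreover have "(W^^j) x \<in> S" by (rule pon_funpow_in[OF Wpon xS])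
    ultimately show False using Q OW by (auto simp: W_def)
  qed
  define Cyc where "Cyc = orb W ` S"
  have finCyc: "finite Cyc" using fin by (simp add: Cyc_def)
  have evenAll: "even (card {Z\<in>Cyc. card Z = n})" for n
  proof (rule even_card_inv[where f = "\<lambda>Z. Q ` Z"])
    show "finite {Z\<in>Cyc. card Z = n}" using finCyc by simp
    show "\<forall>Z\<in>{Z\<in>Cyc. card Z = n}. Q ` Z \<in> {Z\<in>Cyc. card Z = n} \<and> Q ` Z \<noteq> Z \<and> Q ` (Q ` Z) = Z"
    proof
      fix Z assume "Z \<in> {Z\<in>Cyc. card Z = n}"
      then obtain x where x: "x \<in> S" "Z = orb W x" "card Z = n" by (auto simp: Cyc_def)
      have Ox: "Q x \<in> S" using Q x by auto
      have i1: "Q ` Z = orb W (Q x)" using Oimg x by simp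
      have "card (Q ` Z) = card Z"
        using Oinj orb_sub[OF Wpon x(1)] x(2) by (intro card_image) (auto intro: inj_on_subset)
      moreover have "Q ` (Q ` Z) = Z" using i1 Oimg[OF Ox] Q x by simp
      moreover have "Q ` Z \<noteq> Z"
      proof
        assume "Q ` Z = Z"
        then have "Q x \<in> Z" using self_in_orb x(2) by (metis imageI)
        then show False using Ofix x by simp
      qed
      ultimately show "Q ` Z \<in> {Z\<in>Cyc. card Z = n} \<and> Q ` Z \<noteq> Z \<and> Q ` (Q ` Z) = Z"
        using i1 Ox x by (auto simp: Cyc_def)
    qed
  qed
  define Good where "Good = {Z\<in>Cyc. A t1 \<notin> Z \<and> A t2 \<notin> Z \<and> A t3 \<notin> Z}"
  have Wt: "W (A t3) = t1" "W (A t1) = t2" "W (A t2) = t3" using A T by (auto simp: W_def)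
  have tnot: "t1 \<notin> Z \<and> t2 \<notin> Z \<and> t3 \<notin> Z" if ZG: "Z \<in> Good" for Z
  proof -
    obtain x where x: "x \<in> S" "Z = orb W x" using ZG by (auto simp: Good_def Cyc_def)
    have "A t3 \<notin> Z" "A t1 \<notin> Z" "A t2 \<notin> Z" using ZG by (auto simp: Good_def)
    then show ?thesis using pre_in_orb[OF Wpon _ x(1)] AT Wt x(2) by metis
  qed
  have relA: "\<forall>y\<in>orb W x. W (A (W y)) = A y" if "orb W x \<in> Good" "x \<in> S" for x
  proof
    fix y assume y: "y \<in> orb W x"
    have yS: "y \<in> S" using orb_sub[OF Wpon that(2)] y by auto
    have AyS: "A y \<in> S" using A yS by auto
    have "A y \<noteq> t1" "A y \<noteq> t2" "A y \<noteq> t3" using that(1) y A yS T by (auto simp: Good_def)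
    then have "psi (psi (A y)) = A y" using inv AyS by blast
    moreover have "A (psi (A y)) \<in> S" using A psiS AyS by auto
    ultimately show "W (A (W y)) = A y" using A psiS AyS by (simp add: W_def)
  qed
  have Aimg: "A ` orb W x = orb W (A x)" if "orb W x \<in> Good" "x \<in> S" for x
    using orb_image_sub[OF Wpon Wpon AS that(2) relA[OF that]]
      orb_image_sup[OF Wpon Wpon AS that(2) relA[OF that]] by blast
  have AGood: "A ` Z \<in> Good" if ZG: "Z \<in> Good" for Z
  proof -
    obtain x where x: "x \<in> S" "Z = orb W x" using ZG by (auto simp: Good_def Cyc_def)
    have e: "A ` Z = orb W (A x)" using Aimg that x by simp
    have "A x \<in> S" using A x by auto
    then have "A ` Z \<in> Cyc" using e by (simp add: Cyc_def)
    moreover have "A ti \<notin> A ` Z" if "ti \<in> {t1,t2,t3}" for ti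
    proof
      assume "A ti \<in> A ` Z"
      then obtain z where z: "z \<in> Z" "A ti = A z" by auto
      have "z \<in> S" using z x orb_sub[OF Wpon x(1)] by auto
      then have "ti = z" using z A that T by (metis insert_iff empty_iff)
      then show False using tnot[OF \<open>Z \<in> Good\<close>] z that by auto
    qed
    ultimately show ?thesis by (auto simp: Good_def)
  qed
  have Anfix: "A ` Z \<noteq> Z" if ZG: "Z \<in> Good" for Z
  proof
    assume eq: "A ` Z = Z"
    obtain x where x: "x \<in> S" "Z = orb W x" using ZG by (auto simp: Good_def Cyc_def)
    have "A x \<in> Z" using eq x self_in_orb by (metis imageI)
    then obtain k where k: "A x = (W^^k) x" using x by (auto simp: orb_def)
    have rA: "\<forall>y\<in>orb W x. W (A (W y)) = A y" using relA ZG x by simp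
    obtain j where j: "A ((W^^j) x) = (W^^j) x \<or> (A ((W^^j) x) = (W^^Suc j) x \<and> k = 2*j+1)"
      using reflect[OF Wpon x(1) AS rA k] by blast
    have yS: "(W^^j) x \<in> S" by (rule pon_funpow_in[OF Wpon x(1)])
    have Winj: "inj_on W S" using Wpon unfolding pon_def by blast
    have fixp: "v = p" if "v \<in> S" "psi v = v" for v using p(3) that by blast
    have "A ((W^^j) x) \<noteq> (W^^j) x" using A yS by blast
    with j have "A ((W^^j) x) = (W^^Suc j) x" by blast
    then have e1: "A ((W^^j) x) = W ((W^^j) x)" by simp
    have AyS: "A ((W^^j) x) \<in> S" using A yS by blast
    have "psi (A ((W^^j) x)) = A ((W^^j) x)" using e1 by (simp add: W_def)
    then have pe: "A ((W^^j) x) = p" using fixp AyS by blast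
    then have "p = W ((W^^j) x)" using e1 by simp
    then have "p \<in> Z" using x funpow_in_orb[where g=W and n="Suc j" and x=x] by simp
    then have Zp: "Z = orb W p" using orb_same[OF Wpon x(1)] x by simp
    define n where "n = per W p"
    have n: "0 < n" "(W^^n) p = p" using per[OF Wpon p(1)] n_def by auto
    have "(W^^(Suc (n-1))) p = p" using n by simp
    then have w1: "W ((W^^(n-1)) p) = p" by (simp only: funpow.simps o_apply)
    have "A (A p) = p" using A p(1) by blast
    then have w2: "W (A p) = p" using p(2) by (simp add: W_def)
    have "(W^^(n-1)) p \<in> S" by (rule pon_funpow_in[OF Wpon p(1)])
    moreover have "A p \<in> S" using A p(1) by blast
    ultimately have k2: "A p = (W^^(n-1)) p" using inj_onD[OF Winj, of "A p" "(W^^(n-1)) p"] w1 w2 by simp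
    have rA2: "\<forall>y\<in>orb W p. W (A (W y)) = A y" using rA Zp x by simp
    obtain i where i: "A ((W^^i) p) = (W^^i) p \<or> (A ((W^^i) p) = (W^^Suc i) p \<and> n - 1 = 2*i+1)"
      using reflect[OF Wpon p(1) AS rA2 k2] by blast
    have vS: "(W^^i) p \<in> S" by (rule pon_funpow_in[OF Wpon p(1)])
    have "A ((W^^i) p) \<noteq> (W^^i) p" using A vS by blast
    with i have i2: "A ((W^^i) p) = (W^^Suc i) p" "n - 1 = 2*i+1" by blast+
    then have e2: "A ((W^^i) p) = W ((W^^i) p)" by simp
    have AvS: "A ((W^^i) p) \<in> S" using A vS by blast
    have "psi (A ((W^^i) p)) = A ((W^^i) p)" using e2 by (simp add: W_def)
    then have "A ((W^^i) p) = p" using fixp AvS by blast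
    then have ws: "(W^^Suc i) p = p" by (rule trans[OF i2(1)[symmetric]])
    have "per W p \<le> Suc i" by (rule per_le[OF _ ws]) simp
    then have "n \<le> Suc i" using n_def by simp
    then show False using i2 n by simp
  qed
  have evenGood: "even (card {Z\<in>Good. card Z = n})" for n
  proof (rule even_card_inv[where f = "\<lambda>Z. A ` Z"])
    show "finite {Z\<in>Good. card Z = n}" using finCyc by (simp add: Good_def)
    show "\<forall>Z\<in>{Z\<in>Good. card Z = n}. A ` Z \<in> {Z\<in>Good. card Z = n} \<and> A ` Z \<noteq> Z \<and> A ` (A ` Z) = Z"
    proof
      fix Z assume Zn: "Z \<in> {Z\<in>Good. card Z = n}"
      then have ZG: "Z \<in> Good" by simp
      obtain x where x: "x \<in> S" "Z = orb W x" using ZG by (auto simp: Good_def Cyc_def)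
      have Ax: "A x \<in> S" using A x by auto
      have i1: "A ` Z = orb W (A x)" using Aimg ZG x by simp
      have "card (A ` Z) = card Z"
        using Ainj orb_sub[OF Wpon x(1)] x(2) by (intro card_image) (auto intro: inj_on_subset)
      moreover have "A ` (A ` Z) = Z"
      proof -
        have "orb W (A x) \<in> Good" using AGood[OF ZG] i1 by simp
        then have "A ` orb W (A x) = orb W (A (A x))" using Aimg Ax by simp
        then show ?thesis using i1 A x by simp
      qed
      ultimately show "A ` Z \<in> {Z\<in>Good. card Z = n} \<and> A ` Z \<noteq> Z \<and> A ` (A ` Z) = Z"
        using AGood[OF ZG] Anfix[OF ZG] Zn by auto
    qed
  qed
  define X1 where "X1 = orb W (A t1)"
  define X2 where "X2 = orb W (A t2)"
  define X3 where "X3 = orb W (A t3)"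
  have XC: "X1 \<in> Cyc" "X2 \<in> Cyc" "X3 \<in> Cyc" using AT by (auto simp: Cyc_def X1_def X2_def X3_def)
  have XG: "X1 \<notin> Good" "X2 \<notin> Good" "X3 \<notin> Good"
    using self_in_orb[where x="A t1" and g=W] self_in_orb[where x="A t2" and g=W]
      self_in_orb[where x="A t3" and g=W] by (auto simp: Good_def X1_def X2_def X3_def)
  have CB: "Z \<in> {X1, X2, X3}" if ZC: "Z \<in> Cyc" "Z \<notin> Good" for Z
  proof -
    obtain x where x: "x \<in> S" "Z = orb W x" using ZC by (auto simp: Cyc_def)
    have "A t1 \<in> Z \<or> A t2 \<in> Z \<or> A t3 \<in> Z" using ZC by (auto simp: Good_def)
    then show ?thesis using orb_same[OF Wpon x(1)] x by (auto simp: X1_def X2_def X3_def)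
  qed
  have evenB: "even (card {Z\<in>{X1,X2,X3}. card Z = n})" for n
  proof -
    have split: "{Z\<in>Cyc. card Z = n} = {Z\<in>Good. card Z = n} \<union> {Z\<in>{X1,X2,X3}. card Z = n}"
      using CB XC by (auto simp: Good_def)
    have disj: "{Z\<in>Good. card Z = n} \<inter> {Z\<in>{X1,X2,X3}. card Z = n} = {}" using XG by auto
    have "card {Z\<in>Cyc. card Z = n} = card {Z\<in>Good. card Z = n} + card {Z\<in>{X1,X2,X3}. card Z = n}"
      unfolding split using finCyc disj by (intro card_Un_disjoint) (auto simp: Good_def)
    then show ?thesis using evenAll[of n] evenGood[of n] by simp
  qed
  have same: "orb W (A ti) = orb W (A tj)" if "A ti \<in> orb W (A tj)" "tj \<in> S" for ti tj
    using orb_same[OF Wpon _ that(1)] A that(2) by auto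
  have cb: "False" if "A u2 \<in> orb W (A u1)" "A u3 \<notin> orb W (A u1)"
      "card (orb W (A u3)) = card (orb W (A u1))"
      "u1\<in>S" "u2\<in>S" "u3\<in>S" "u1\<noteq>u2" "u2\<noteq>u3" "u1\<noteq>u3" "psi u1 = u2" "psi u2 = u3" "psi u3 = u1"
      "\<forall>x\<in>S. x \<noteq> u1 \<longrightarrow> x \<noteq> u2 \<longrightarrow> x \<noteq> u3 \<longrightarrow> psi (psi x) = x" for u1 u2 u3
    using caseb[OF fin A psiS psi_inj that(4-13)] that(1-3) by (simp add: W_def)
  show False
  proof (cases "X1 = X2")
    case True
    show ?thesis
    proof (cases "X1 = X3")
      case True
      then have "{Z\<in>{X1,X2,X3}. card Z = card X1} = {X1}" using \<open>X1 = X2\<close> by auto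
      then show ?thesis using evenB[of "card X1"] by simp
    next
      case False
      have c: "card X3 = card X1"
      proof (rule ccontr)
        assume "card X3 \<noteq> card X1"
        then have "{Z\<in>{X1,X2,X3}. card Z = card X1} = {X1}" using \<open>X1 = X2\<close> by auto
        then show False using evenB[of "card X1"] by simp
      qed
      have "A t2 \<in> orb W (A t1)" using True self_in_orb by (metis X1_def X2_def)
      moreover have "A t3 \<notin> orb W (A t1)" using False same AT by (metis X1_def X3_def T(1))
      ultimately show ?thesis using cb[of t2 t1 t3] c T inv unfolding X1_def X3_def by blast
    qed
  next
    case False
    show ?thesis
    proof (cases "X2 = X3")
      case True
      have c: "card X1 = card X2"
      proof (rule ccontr)
        assume "card X1 \<noteq> card X2"
        then have "{Z\<in>{X1,X2,X3}. card Z = card X1} = {X1}" using \<open>X2 = X3\<close> by auto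
        then show False using evenB[of "card X1"] by simp
      qed
      have "A t3 \<in> orb W (A t2)" using True self_in_orb by (metis X2_def X3_def)
      moreover have "A t1 \<notin> orb W (A t2)" using False same AT by (metis X1_def X2_def T(2))
      ultimately show ?thesis using cb[of t3 t2 t1] c T inv unfolding X1_def X2_def by blast
    next
      case False2: False
      show ?thesis
      proof (cases "X1 = X3")
        case True
        have c: "card X2 = card X3"
        proof (rule ccontr)
          assume "card X2 \<noteq> card X3"
          then have "{Z\<in>{X1,X2,X3}. card Z = card X2} = {X2}" using \<open>X1 = X3\<close> by auto
          then show False using evenB[of "card X2"] by simp
        qed
        have "A t1 \<in> orb W (A t3)" using True self_in_orb by (metis X1_def X3_def)
        moreover have "A t2 \<notin> orb W (A t3)" using False2 same AT by (metis X2_def X3_def T(3))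
        ultimately show ?thesis using cb[of t1 t3 t2] c T inv unfolding X2_def X3_def by blast
      next
        case False3: False
        consider "card X1 \<noteq> card X2" "card X1 \<noteq> card X3" | "card X1 = card X2" "card X1 = card X3"
          | "card X1 = card X2" "card X1 \<noteq> card X3" | "card X1 \<noteq> card X2" "card X1 = card X3" by blast
        then show ?thesis
        proof cases
          case 1
          then have "{Z\<in>{X1,X2,X3}. card Z = card X1} = {X1}" by auto
          then show ?thesis using evenB[of "card X1"] by simp
        next
          case 2
          then have "{Z\<in>{X1,X2,X3}. card Z = card X1} = {X1,X2,X3}" by auto
          then show ?thesis using evenB[of "card X1"] False False2 False3 by simp
        next
          case 3
          then have "{Z\<in>{X1,X2,X3}. card Z = card X3} = {X3}" by auto
          then show ?thesis using evenB[of "card X3"] by simp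
        next
          case 4
          then have "{Z\<in>{X1,X2,X3}. card Z = card X2} = {X2}" by auto
          then show ?thesis using evenB[of "card X2"] by simp
        qed
      qed
    qed
  qed
qed


lemma fp2: "(f^^2) x = f (f x)"
proof -
  have e: "(2::nat) = Suc (Suc 0)" by simp
  show ?thesis by (simp only: e funpow.simps o_apply id_apply)
qed
lemma fp4: "(f^^4) x = f (f (f (f x)))"
proof -
  have e: "(4::nat) = Suc (Suc (Suc (Suc 0)))" by simp
  show ?thesis by (simp only: e funpow.simps o_apply id_apply)
qed
lemma fp6: "(f^^6) x = f (f (f (f (f (f x)))))"
proof -
  have e: "(6::nat) = Suc (Suc (Suc (Suc (Suc (Suc 0)))))" by simp
  show ?thesis by (simp only: e funpow.simps o_apply id_apply)
qed

theorem theorem5: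
  fixes D :: "'a set" and \<alpha> \<sigma> :: "'a \<Rightarrow> 'a"
  assumes "torus_map D \<alpha> \<sigma>"
    and "quadrangulation D \<alpha> \<sigma>"
    and "degrees_2_6 D \<sigma>"
  shows "\<not> (\<exists>c. face_alternating_2col D \<alpha> \<sigma> c)"
proof
  assume "\<exists>c. face_alternating_2col D \<alpha> \<sigma> c"
  then obtain c where fc: "face_alternating_2col D \<alpha> \<sigma> c" by (elim exE)
  have col1: "\<forall>d\<in>D. c (\<alpha> d) = c d" using fc unfolding face_alternating_2col_def by (rule conjunct1)
  have col2: "\<forall>d\<in>D. c (face_perm \<alpha> \<sigma> d) \<noteq> c d" using fc unfolding face_alternating_2col_def by (rule conjunct2)
  note col = col1 col2
  have cm: "comb_map D \<alpha> \<sigma>" using assms(1) by (simp add: torus_map_def)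
  then have fin: "finite D" and al: "\<forall>d\<in>D. \<alpha> d \<in> D \<and> \<alpha> d \<noteq> d \<and> \<alpha> (\<alpha> d) = d"
    and sb: "bij_betw \<sigma> D D" unfolding comb_map_def by blast+
  define \<phi> where "\<phi> = face_perm \<alpha> \<sigma>"
  have phi: "\<phi> d = \<sigma> (\<alpha> d)" for d by (simp add: \<phi>_def face_perm_def)
  have sD: "\<sigma> d \<in> D" if "d \<in> D" for d using sb that by (rule bij_betw_apply)
  have sinj: "inj_on \<sigma> D" using sb by (rule bij_betw_imp_inj_on)
  have ainj: "inj_on \<alpha> D" unfolding inj_on_def using al by metis
  have aD: "\<alpha> d \<in> D" if "d \<in> D" for d using al that by blast
  have phD: "\<phi> d \<in> D" if "d \<in> D" for d using sD aD that phi by simp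
  have spon: "pon \<sigma> D" using fin sD sinj by (auto simp: pon_def)
  have phinj: "inj_on \<phi> D"
  proof -
    have "\<alpha> ` D \<subseteq> D" using aD by auto
    then have "inj_on \<sigma> (\<alpha> ` D)" by (rule inj_on_subset[OF sinj])
    then have "inj_on (\<sigma> \<circ> \<alpha>) D" using ainj by (intro comp_inj_on)
    then show ?thesis by (simp add: \<phi>_def face_perm_def)
  qed
  have ppon: "pon \<phi> D" using fin phD phinj by (auto simp: pon_def)
  have cphi: "c (\<phi> d) \<noteq> c d" if "d \<in> D" for d using col(2) that by (simp add: \<phi>_def)
  have cs: "c (\<sigma> d) \<noteq> c d" if "d \<in> D" for d
  proof -
    have "\<sigma> d = \<phi> (\<alpha> d)" using al that phi by simp
    then show ?thesis using cphi[OF aD[OF that]] col(1) that by simp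
  qed
  have quad: "\<forall>f\<in>orbits \<phi> D. card f = 4" using assms(2) by (simp add: quadrangulation_def \<phi>_def)
  have per4: "per \<phi> d = 4" if "d \<in> D" for d
    using quad card_orb[OF ppon that] that by (auto simp: orbits_def)
  have ph4: "\<phi> (\<phi> (\<phi> (\<phi> d))) = d" if "d \<in> D" for d
    using per(2)[OF ppon that] per4[OF that] by (simp add: fp4)
  have ph2: "\<phi> (\<phi> d) \<noteq> d" if "d \<in> D" for d
  proof
    assume "\<phi> (\<phi> d) = d"
    then have "(\<phi>^^2) d = d" by (simp add: fp2)
    then have "per \<phi> d \<le> 2" by (rule per_le[rotated]) simp
    then show False using per4[OF that] by simp
  qed
  define S where "S = {d\<in>D. c d}"
  have SD: "S \<subseteq> D" by (auto simp: S_def)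
  have finS: "finite S" using fin SD by (rule finite_subset[rotated])
  have hA: "\<forall>x\<in>S. \<alpha> x \<in> S \<and> \<alpha> x \<noteq> x \<and> \<alpha> (\<alpha> x) = x" using al col(1) by (auto simp: S_def)
  have hQ: "\<forall>x\<in>S. \<phi> (\<phi> x) \<in> S \<and> \<phi> (\<phi> x) \<noteq> x \<and> (\<lambda>x. \<phi> (\<phi> x)) ((\<lambda>x. \<phi> (\<phi> x)) x) = x"
  proof
    fix x assume x: "x \<in> S"
    then have xD: "x \<in> D" using SD by auto
    have "c (\<phi> (\<phi> x)) = c x" using cphi[OF xD] cphi[OF phD[OF xD]] by blast
    then show "\<phi> (\<phi> x) \<in> S \<and> \<phi> (\<phi> x) \<noteq> x \<and> (\<lambda>x. \<phi> (\<phi> x)) ((\<lambda>x. \<phi> (\<phi> x)) x) = x"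
      using x xD phD ph2 ph4 by (auto simp: S_def)
  qed
  have hpsiS: "\<forall>x\<in>S. (\<lambda>x. \<sigma> (\<sigma> x)) x \<in> S"
  proof
    fix x assume x: "x \<in> S"
    then have xD: "x \<in> D" using SD by auto
    have "c (\<sigma> (\<sigma> x)) = c x" using cs[OF xD] cs[OF sD[OF xD]] by blast
    then show "(\<lambda>x. \<sigma> (\<sigma> x)) x \<in> S" using x xD sD by (auto simp: S_def)
  qed
  have hpsi_inj: "inj_on (\<lambda>x. \<sigma> (\<sigma> x)) S"
  proof -
    have "\<sigma> ` D \<subseteq> D" using sD by auto
    then have "inj_on \<sigma> (\<sigma> ` D)" by (rule inj_on_subset[OF sinj])
    then have "inj_on (\<sigma> \<circ> \<sigma>) D" using sinj by (intro comp_inj_on)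
    then have "inj_on (\<sigma> \<circ> \<sigma>) S" using SD by (rule inj_on_subset)
    then show ?thesis by (simp add: comp_def)
  qed
  have hrel: "\<forall>x\<in>S. (\<lambda>x. \<sigma> (\<sigma> x)) (\<alpha> ((\<lambda>x. \<phi> (\<phi> x)) ((\<lambda>x. \<sigma> (\<sigma> x)) (\<alpha> x)))) = (\<lambda>x. \<phi> (\<phi> x)) x"
  proof
    fix y assume "y \<in> S"
    then have yD: "y \<in> D" using SD by auto
    define z where "z = \<sigma> (\<phi> y)"
    have zD: "z \<in> D" using sD phD yD z_def by simp
    have z2: "\<sigma> (\<sigma> (\<alpha> y)) = z" by (simp add: z_def phi)
    have q1: "\<phi> (\<phi> (\<phi> (\<phi> z))) = z" by (rule ph4[OF zD])
    have q2: "\<phi> (\<alpha> (\<phi> y)) = z" using al phD[OF yD] by (simp add: phi z_def)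
    have "\<phi> (\<phi> (\<phi> z)) = \<alpha> (\<phi> y)"
      using inj_onD[OF phinj, of "\<phi> (\<phi> (\<phi> z))" "\<alpha> (\<phi> y)"] q1 q2 phD zD aD yD by simp
    then have "\<sigma> (\<sigma> (\<alpha> (\<phi> (\<phi> z)))) = \<phi> (\<phi> y)" by (simp add: phi[symmetric])
    then show "(\<lambda>x. \<sigma> (\<sigma> x)) (\<alpha> ((\<lambda>x. \<phi> (\<phi> x)) ((\<lambda>x. \<sigma> (\<sigma> x)) (\<alpha> y)))) = (\<lambda>x. \<phi> (\<phi> x)) y"
      using z2 by simp
  qed
  have hOW: "\<forall>x\<in>S. (\<lambda>x. \<phi> (\<phi> x)) x \<noteq> (\<lambda>x. \<sigma> (\<sigma> x)) (\<alpha> x)"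
  proof
    fix y assume "y \<in> S"
    then have yD: "y \<in> D" using SD by auto
    show "(\<lambda>x. \<phi> (\<phi> x)) y \<noteq> (\<lambda>x. \<sigma> (\<sigma> x)) (\<alpha> y)"
    proof
      assume "(\<lambda>x. \<phi> (\<phi> x)) y = (\<lambda>x. \<sigma> (\<sigma> x)) (\<alpha> y)"
      then have "\<sigma> (\<alpha> (\<phi> y)) = \<sigma> (\<phi> y)" by (simp add: phi)
      then have "\<alpha> (\<phi> y) = \<phi> y" using inj_onD[OF sinj] aD phD yD by blast
      then show False using al phD[OF yD] by blast
    qed
  qed
  have calt: "c ((\<sigma>^^j) d) = (if even j then c d else \<not> c d)" if "d \<in> D" for d j
  proof (induction j)
    case 0 then show ?case by simp
  next
    case (Suc j)
    have "(\<sigma>^^j) d \<in> D" by (rule pon_funpow_in[OF spon that])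
    then show ?case using cs Suc by auto
  qed
  obtain u w where uw: "u \<in> orbits \<sigma> D" "w \<in> orbits \<sigma> D" "card u = 2" "card w = 6"
    "\<forall>v\<in>orbits \<sigma> D. v \<noteq> u \<longrightarrow> v \<noteq> w \<longrightarrow> card v = 4"
    using assms(3) by (auto simp: degrees_2_6_def)
  obtain x0 where x0: "x0 \<in> D" "u = orb \<sigma> x0" using uw(1) by (auto simp: orbits_def)
  obtain y0 where y0: "y0 \<in> D" "w = orb \<sigma> y0" using uw(2) by (auto simp: orbits_def)
  have orbI: "orb \<sigma> d \<in> orbits \<sigma> D" if "d \<in> D" for d using that by (simp add: orbits_def)
  define p where "p = (if c x0 then x0 else \<sigma> x0)"
  have pD: "p \<in> D" using x0 sD by (simp add: p_def)
  have cp: "c p" using cs[OF x0(1)] by (auto simp: p_def)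
  have "p \<in> orb \<sigma> x0" using self_in_orb step_in_orb by (auto simp: p_def)
  then have pu: "orb \<sigma> p = u" using orb_same[OF spon x0(1)] x0 by simp
  have perp: "per \<sigma> p = 2" using card_orb[OF spon pD] pu uw(3) by simp
  have pfix: "\<sigma> (\<sigma> p) = p" using per(2)[OF spon pD] perp by (simp add: fp2)
  have pS: "p \<in> S" using pD cp by (simp add: S_def)
  have puniq: "\<forall>x\<in>S. \<sigma> (\<sigma> x) = x \<longrightarrow> x = p"
  proof (intro ballI impI)
    fix x assume x: "x \<in> S" "\<sigma> (\<sigma> x) = x"
    then have xD: "x \<in> D" using SD by auto
    have "(\<sigma>^^2) x = x" using x by (simp add: fp2)
    then have "per \<sigma> x \<le> 2" by (rule per_le[rotated]) simp
    then have cx: "card (orb \<sigma> x) \<le> 2" using card_orb[OF spon xD] by simp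
    have "orb \<sigma> x = u"
    proof (rule ccontr)
      assume "orb \<sigma> x \<noteq> u"
      then show False using uw cx orbI[OF xD] by (cases "orb \<sigma> x = w") auto
    qed
    then have "x \<in> orb \<sigma> p" using pu self_in_orb by metis
    then obtain n where n: "n < 2" "x = (\<sigma>^^n) p" using orb_eq[OF spon pD] perp by auto
    then have "n = 0 \<or> n = 1" by auto
    then show "x = p" using n calt[OF pD, of n] x cp by (auto simp: S_def)
  qed
  define t1 where "t1 = (if c y0 then y0 else \<sigma> y0)"
  have t1D: "t1 \<in> D" using y0 sD by (simp add: t1_def)
  have ct1: "c t1" using cs[OF y0(1)] by (auto simp: t1_def)
  have "t1 \<in> orb \<sigma> y0" using self_in_orb step_in_orb by (auto simp: t1_def)
  then have tw: "orb \<sigma> t1 = w" using orb_same[OF spon y0(1)] y0 by simp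
  have pert: "per \<sigma> t1 = 6" using card_orb[OF spon t1D] tw uw(4) by simp
  define t2 where "t2 = \<sigma> (\<sigma> t1)"
  define t3 where "t3 = \<sigma> (\<sigma> t2)"
  have t2e: "(\<sigma>^^2) t1 = t2" by (simp add: fp2 t2_def)
  have t3e: "(\<sigma>^^4) t1 = t3" by (simp add: fp4 t2_def t3_def)
  have t1e: "\<sigma> (\<sigma> t3) = t1" using per(2)[OF spon t1D] pert by (simp add: fp6 t2_def t3_def)
  have t2D: "t2 \<in> D" using sD t1D by (simp add: t2_def)
  have t3D: "t3 \<in> D" using sD t2D by (simp add: t3_def)
  have tS: "t1 \<in> S" "t2 \<in> S" "t3 \<in> S"
    using t1D t2D t3D ct1 calt[OF t1D, of 2] calt[OF t1D, of 4] t2e t3e by (auto simp: S_def)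
  have t12: "t1 \<noteq> t2"
  proof
    assume "t1 = t2"
    then have "(\<sigma>^^2) t1 = t1" using t2e by simp
    then have "per \<sigma> t1 \<le> 2" by (rule per_le[rotated]) simp
    then show False using pert by simp
  qed
  have t13: "t1 \<noteq> t3"
  proof
    assume "t1 = t3"
    then have "(\<sigma>^^4) t1 = t1" using t3e by simp
    then have "per \<sigma> t1 \<le> 4" by (rule per_le[rotated]) simp
    then show False using pert by simp
  qed
  have t23: "t2 \<noteq> t3"
  proof
    assume "t2 = t3"
    then have "\<sigma> (\<sigma> t1) = \<sigma> (\<sigma> t2)" by (simp add: t2_def t3_def)
    then have "\<sigma> t1 = \<sigma> t2" using inj_onD[OF sinj] sD t1D t2D by blast
    then have "t1 = t2" using inj_onD[OF sinj] t1D t2D by blast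
    then show False using t12 by simp
  qed
  have hinv: "\<forall>x\<in>S. x \<noteq> t1 \<longrightarrow> x \<noteq> t2 \<longrightarrow> x \<noteq> t3 \<longrightarrow> (\<lambda>x. \<sigma> (\<sigma> x)) ((\<lambda>x. \<sigma> (\<sigma> x)) x) = x"
  proof (intro ballI impI)
    fix x assume x: "x \<in> S" "x \<noteq> t1" "x \<noteq> t2" "x \<noteq> t3"
    then have xD: "x \<in> D" using SD by auto
    have cx: "c x" using x by (simp add: S_def)
    have "(\<sigma>^^4) x = x"
    proof (cases "orb \<sigma> x = w")
      case True
      then have "x \<in> orb \<sigma> t1" using tw self_in_orb by metis
      then obtain j where j: "j < 6" "x = (\<sigma>^^j) t1" using orb_eq[OF spon t1D] pert by auto
      have "even j" using calt[OF t1D, of j] j cx ct1 by (auto split: if_splits)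
      with j(1) have "j = 0 \<or> j = 2 \<or> j = 4" by presburger
      then show ?thesis using j x t2e t3e by auto
    next
      case False
      show ?thesis
      proof (cases "orb \<sigma> x = u")
        case True
        then have "per \<sigma> x = 2" using card_orb[OF spon xD] uw(3) by simp
        then have "(\<sigma>^^2) x = x" using per(2)[OF spon xD] by simp
        then show ?thesis by (simp add: fp2 fp4)
      next
        case False2: False
        then have "card (orb \<sigma> x) = 4" using uw(5) orbI[OF xD] False by blast
        then have "per \<sigma> x = 4" using card_orb[OF spon xD] by simp
        then show ?thesis using per(2)[OF spon xD] by simp
      qed
    qed
    then show "(\<lambda>x. \<sigma> (\<sigma> x)) ((\<lambda>x. \<sigma> (\<sigma> x)) x) = x" by (simp add: fp4)
  qed
  show False
    using key[OF finS hA hQ hpsiS hpsi_inj hrel hOW pS _ _ tS t12 t23 t13 _ _ _ hinv]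
      pfix puniq t2_def t3_def t1e by simp
qed

end
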